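(* If $p_1,\dots,p_n\in\mathrm{ESPR}$, then there exists $h\in\mathrm{PR}\cap\mathscr{A}_0$ such that $p_1,\dots,p_n\in\mathcal{P}_h$.
   Context: $\mathscr{H}_\infty$: functions analytic and bounded on $\mathrm{Re}(s)>0$; $\mathscr{A}_0$: those in $\mathscr{H}_\infty$ extending continuously to $j\mathbb{R}\cup\{\infty\}$. $g\in\mathrm{PR}$ if $g$ is analytic in $\mathrm{Re}(s)>0$, real for positive real $s$, and $\mathrm{Re}(g(s))\ge0$ for $\mathrm{Re}(s)>0$; $g\in\mathrm{ESPR}$ if moreover $g\in\mathscr{A}_0$ and $g-\epsilon\in\mathrm{PR}$ for some $\epsilon>0$. $\mathcal{P}_h:=\{p\in\mathscr{H}_\infty: p(0)\ne0,\ h(s)(1+p(s)/s)\in\mathrm{ESPR}\}$. *)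

theory Defs
  imports "HOL-Analysis.Analysis"
begin

definition RHP :: "complex set" where
  "RHP = {s. Re s > 0}"

definition CRHP :: "complex set" where
  "CRHP = {s. Re s \<ge> 0}"

definition Hinf :: "(complex \<Rightarrow> complex) \<Rightarrow> bool" where
  "Hinf f \<longleftrightarrow> f holomorphic_on RHP \<and> bounded (f ` RHP)"

text \<open>A_0: H-infinity functions that extend continuously to the imaginary axis
  and the point at infinity, i.e. there is a continuous extension to the closed
  right half-plane which has a limit at infinity.\<close>
definition A0 :: "(complex \<Rightarrow> complex) \<Rightarrow> bool" where
  "A0 f \<longleftrightarrow> Hinf f \<and>
     (\<exists>g. continuous_on CRHP g \<and> (\<forall>s\<in>RHP. g s = f s) \<and>
          (\<exists>L. (g \<longlongrightarrow> L) (inf at_infinity (principal CRHP))))"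

definition PR :: "(complex \<Rightarrow> complex) \<Rightarrow> bool" where
  "PR g \<longleftrightarrow> g holomorphic_on RHP \<and>
     (\<forall>x::real. x > 0 \<longrightarrow> g (complex_of_real x) \<in> \<real>) \<and>
     (\<forall>s\<in>RHP. Re (g s) \<ge> 0)"

definition ESPR :: "(complex \<Rightarrow> complex) \<Rightarrow> bool" where
  "ESPR g \<longleftrightarrow> A0 g \<and> (\<exists>\<epsilon>::real. \<epsilon> > 0 \<and> PR (\<lambda>s. g s - complex_of_real \<epsilon>))"

text \<open>The class P_h. The value p(0) is read as the boundary value of p at 0,
  i.e. the limit of p(s) as s tends to 0 within the open right half-plane.\<close>
definition Pclass :: "(complex \<Rightarrow> complex) \<Rightarrow> (complex \<Rightarrow> complex) set" where
  "Pclass h = {p. Hinf p \<and>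
     (\<exists>c. (p \<longlongrightarrow> c) (at 0 within RHP) \<and> c \<noteq> 0) \<and>
     ESPR (\<lambda>s. h s * (1 + p s / s))}"

end

theory Submission
  imports Defs
begin

lemma ineq:
  fixes x y u v e M a :: real
  assumes "x > 0" "u \<ge> e" "e \<ge> 0" "u^2 + v^2 \<le> M^2" "a > 0" "a*e \<ge> M^2"
  shows "min (1/4) (e/(4*a)) * ((x+a)^2 + y^2) \<le> (x+u)*(x+a) + (y+v)*y"
proof -
  define d where "d = min (1/4) (e/(4*a))"
  have d0: "d \<ge> 0" using assms by (simp add: d_def)
  have d1: "d \<le> 1/4" by (simp add: d_def)
  have d2: "d * a \<le> e/4" using assms by (simp add: d_def min_def field_simps)
  have vy: "2 * (v * y) + y^2 + v^2 \<ge> 0"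
  proof -
    have "0 \<le> (y+v)^2" by simp
    then show ?thesis by (simp add: power2_eq_square algebra_simps)
  qed
  have v2: "v^2 \<le> M^2" using assms(4) by (smt (verit) zero_le_power2)
  have ux: "u*x \<ge> 0" using assms by simp
  have au: "a*u \<ge> a*e" using assms by simp
  have num: "(x+u)*(x+a) + (y+v)*y \<ge> x^2 + a*x + y^2/2 + a*e/2"
  proof -
    have "(x+u)*(x+a) + (y+v)*y = x^2 + a*x + u*x + a*u + y^2 + v * y"
      by (simp add: power2_eq_square algebra_simps)
    then show ?thesis using vy v2 ux au assms by linarith
  qed
  have "d * ((x+a)^2 + y^2) = d*(x^2 + 2*a*x + y^2) + (d*a)*a"
    by (simp add: power2_eq_square algebra_simps)
  also have "\<dots> \<le> (1/4)*(x^2 + 2*a*x + y^2) + (a * e)/4"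
  proof (rule add_mono)
    show "d*(x^2 + 2*a*x + y^2) \<le> (1/4)*(x^2 + 2*a*x + y^2)"
      apply (rule mult_right_mono[OF d1]) using assms by simp
    have "(d*a)*a \<le> (e/4)*a" apply (rule mult_right_mono[OF d2]) using assms by simp
    then show "(d*a)*a \<le> (a * e)/4" by (simp add: algebra_simps)
  qed
  also have "\<dots> \<le> x^2 + a*x + y^2/2 + a*e/2"
  proof -
    have "a * x \<ge> 0" "a * e \<ge> 0" using assms by auto
    moreover have "x^2 \<ge> 0" "y^2 \<ge> 0" by auto
    ultimately show ?thesis by (simp add: field_simps)
  qed
  finally have "d * ((x+a)^2 + y^2) \<le> x^2 + a*x + y^2/2 + a*e/2" .
  then show ?thesis unfolding d_def[symmetric] using num by (rule order_trans)
qed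


lemma A0_cong:
  assumes "A0 f" "\<forall>s\<in>RHP. f s = f' s"
  shows "A0 f'"
proof -
  have o: "open RHP" unfolding RHP_def by (simp add: open_halfspace_Re_gt)
  from assms(1) obtain g where g: "continuous_on CRHP g" "\<forall>s\<in>RHP. g s = f s"
    "\<exists>L. (g \<longlongrightarrow> L) (inf at_infinity (principal CRHP))"
    and H: "f holomorphic_on RHP" "bounded (f ` RHP)" unfolding A0_def Hinf_def by blast
  have "f' holomorphic_on RHP" using H(1) holomorphic_cong[of RHP RHP f f'] assms(2) by simp
  moreover have "f' ` RHP = f ` RHP" using assms(2) by (auto simp: image_def)
  ultimately show ?thesis unfolding A0_def Hinf_def using g H assms(2) by auto
qed

lemma RHP_ne0: "s \<in> RHP \<Longrightarrow> s \<noteq> 0" unfolding RHP_def by auto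

lemma F_props:
  fixes q :: "complex \<Rightarrow> complex" and e M a :: real
  assumes A: "A0 q" and real: "\<forall>x::real. x>0 \<longrightarrow> q (of_real x) \<in> \<real>"
    and lb: "\<forall>s\<in>RHP. Re (q s) \<ge> e" and e0: "e \<ge> 0" and bnd: "\<forall>s\<in>RHP. cmod (q s) \<le> M"
    and a0: "a > 0" and ae: "a*e \<ge> M^2"
  shows "A0 (\<lambda>s. (s + q s)/(s + of_real a))"
    and "\<forall>x::real. x>0 \<longrightarrow> (of_real x + q (of_real x))/(of_real x + of_real a) \<in> \<real>"
    and "\<forall>s\<in>RHP. Re ((s + q s)/(s + of_real a)) \<ge> min (1/4) (e/(4*a))"
proof -
  show "\<forall>x::real. x>0 \<longrightarrow> (of_real x + q (of_real x))/(of_real x + of_real a) \<in> \<real>"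
  proof (intro allI impI)
    fix x :: real assume "x > 0"
    then have "q (of_real x) \<in> \<real>" using real by blast
    then show "(of_real x + q (of_real x))/(of_real x + of_real a) \<in> \<real>"
      by (intro Reals_divide Reals_add) auto
  qed
  show "\<forall>s\<in>RHP. Re ((s + q s)/(s + of_real a)) \<ge> min (1/4) (e/(4*a))"
  proof
    fix s assume s: "s \<in> RHP"
    have x: "Re s > 0" using s by (simp add: RHP_def)
    have u: "Re (q s) \<ge> e" using lb s by blast
    have nm: "cmod (q s) \<le> M" using bnd s by blast
    have "(cmod (q s))^2 \<le> M^2" by (rule power_mono[OF nm norm_ge_zero])
    then have uv: "(Re (q s))^2 + (Im (q s))^2 \<le> M^2" by (simp add: cmod_power2)
    have D: "(Re s + a)^2 + (Im s)^2 > 0" using x a0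
      by (metis add_pos_nonneg add_pos_pos power2_less_0 not_le zero_le_power2 zero_less_power2 less_irrefl)
    have "min (1/4) (e/(4*a)) * ((Re s + a)^2 + (Im s)^2)
        \<le> (Re s + Re (q s))*(Re s + a) + (Im s + Im (q s))*(Im s)"
      by (rule ineq[OF x u e0 uv a0 ae])
    then show "Re ((s + q s)/(s + of_real a)) \<ge> min (1/4) (e/(4*a))"
      using D by (simp add: Re_divide pos_le_divide_eq)
  qed
  show "A0 (\<lambda>s. (s + q s)/(s + of_real a))"
  proof -
    from A obtain g L where g: "continuous_on CRHP g" "\<forall>s\<in>RHP. g s = q s"
      "(g \<longlongrightarrow> L) (inf at_infinity (principal CRHP))"
      and H: "q holomorphic_on RHP" unfolding A0_def Hinf_def by blast
    have nz: "s + of_real a \<noteq> 0" if "s \<in> CRHP" for s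
    proof
      assume "s + of_real a = 0"
      then have "Re (s + of_real a) = 0" by simp
      then show False using that a0 by (simp add: CRHP_def)
    qed
    have nzR: "s + of_real a \<noteq> 0" if "s \<in> RHP" for s
      using nz that by (auto simp: RHP_def CRHP_def)
    have hol: "(\<lambda>s. (s + q s)/(s + of_real a)) holomorphic_on RHP"
      by (intro holomorphic_intros H) (use nzR in auto)
    define B where "B = 1 + (M + a)/a"
    have M0: "M \<ge> 0"
    proof -
      have "(1::complex) \<in> RHP" by (simp add: RHP_def)
      then show ?thesis using bnd norm_ge_zero order_trans by blast
    qed
    have bd: "cmod ((s + q s)/(s + of_real a)) \<le> B" if s: "s \<in> RHP" for s
    proof -
      have na: "cmod (s + of_real a) \<ge> a"
        using complex_Re_le_cmod[of "s + of_real a"] s by (simp add: RHP_def)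
      have n1: "cmod (q s - of_real a) \<le> M + a"
        using norm_triangle_ineq4[of "q s" "of_real a"] bnd s a0 by fastforce
      have "s + q s = (s + of_real a) + (q s - of_real a)" by simp
      then have "cmod (s + q s) \<le> cmod (s + of_real a) + cmod (q s - of_real a)"
        by (metis norm_triangle_ineq)
      also have "\<dots> \<le> cmod (s + of_real a) + (M + a)" using n1 by simp
      also have "M + a \<le> (M + a)/a * cmod (s + of_real a)"
      proof -
        have "(M + a)/a * a \<le> (M + a)/a * cmod (s + of_real a)"
          using na M0 a0 by (intro mult_left_mono) auto
        then show ?thesis using a0 by simp
      qed
      finally have "cmod (s + q s) \<le> B * cmod (s + of_real a)"
        by (simp add: B_def algebra_simps)
      moreover have "cmod (s + of_real a) > 0" using na a0 by linarith
      ultimately show ?thesis by (simp add: norm_divide divide_le_eq)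
    qed
    have bdd: "bounded ((\<lambda>s. (s + q s)/(s + of_real a)) ` RHP)"
      unfolding bounded_iff using bd by blast
    define G where "G = (\<lambda>s. (s + g s)/(s + of_real a))"
    have Gc: "continuous_on CRHP G" unfolding G_def
      by (intro continuous_intros g(1)) (use nz in auto)
    have GR: "\<forall>s\<in>RHP. G s = (s + q s)/(s + of_real a)" using g(2) by (simp add: G_def)
    define F' where "F' = inf (at_infinity :: complex filter) (principal CRHP)"
    have idl: "filterlim (\<lambda>x. x) at_infinity F'"
      by (simp add: F'_def filterlim_def filtermap_ident)
    have "filterlim (\<lambda>x. x + of_real a) at_infinity F'"
      by (rule tendsto_add_filterlim_at_infinity'[OF idl tendsto_const])
    then have t0: "((\<lambda>s. (g s - of_real a)/(s + of_real a)) \<longlongrightarrow> 0) F'"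
      by (intro tendsto_divide_0[OF tendsto_diff[OF g(3)[folded F'_def] tendsto_const]])
    then have t1: "((\<lambda>s. 1 + (g s - of_real a)/(s + of_real a)) \<longlongrightarrow> 1 + 0) F'"
      by (intro tendsto_add tendsto_const)
    have ev: "eventually (\<lambda>s. 1 + (g s - of_real a)/(s + of_real a) = G s) F'"
    proof -
      have "eventually (\<lambda>s. s \<in> CRHP) F'" unfolding F'_def
        by (simp add: eventually_inf_principal)
      then show ?thesis
      proof (rule eventually_mono)
        fix s assume "s \<in> CRHP"
        then have "s + of_real a \<noteq> 0" by (rule nz)
        then show "1 + (g s - of_real a)/(s + of_real a) = G s"
          by (simp add: G_def field_simps)
      qed
    qed
    have "(G \<longlongrightarrow> 1) F'" using tendsto_cong[OF ev] t1 by simp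
    then show ?thesis unfolding A0_def Hinf_def F'_def
      using hol bdd Gc GR by blast
  qed
qed


lemma zero_islimpt_RHP: "0 islimpt RHP"
  unfolding islimpt_approachable
proof (intro allI impI)
  fix e :: real assume e: "e > 0"
  show "\<exists>x'\<in>RHP. x' \<noteq> 0 \<and> dist x' 0 < e"
    by (rule bexI[of _ "complex_of_real (e/2)"]) (use e in \<open>auto simp: RHP_def\<close>)
qed

lemma p_good:
  assumes "ESPR p"
  shows "\<exists>a0>0. \<forall>a\<ge>a0. p \<in> Pclass (\<lambda>s. s / (s + complex_of_real a))"
proof -
  from assms obtain \<epsilon> where A: "A0 p" and e: "\<epsilon> > 0" and P: "PR (\<lambda>s. p s - complex_of_real \<epsilon>)"
    unfolding ESPR_def by blast
  have lb: "\<forall>s\<in>RHP. Re (p s) \<ge> \<epsilon>" using P unfolding PR_def by auto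
  have real: "\<forall>x::real. x>0 \<longrightarrow> p (of_real x) \<in> \<real>"
  proof (intro allI impI)
    fix x :: real assume "x > 0"
    then have "p (of_real x) - of_real \<epsilon> \<in> \<real>" using P unfolding PR_def by blast
    then have "p (of_real x) - of_real \<epsilon> + of_real \<epsilon> \<in> \<real>" by (intro Reals_add) auto
    then show "p (of_real x) \<in> \<real>" by simp
  qed
  from A have H: "Hinf p" unfolding A0_def by blast
  then obtain M where M: "\<forall>s\<in>RHP. cmod (p s) \<le> M"
    unfolding Hinf_def bounded_iff by blast
  from A obtain g where g: "continuous_on CRHP g" "\<forall>s\<in>RHP. g s = p s"
    unfolding A0_def by blast
  have "(g \<longlongrightarrow> g 0) (at 0 within CRHP)"
    using g(1) unfolding continuous_on_def by (auto simp: CRHP_def)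
  then have "(g \<longlongrightarrow> g 0) (at 0 within RHP)"
    by (rule tendsto_within_subset) (auto simp: RHP_def CRHP_def)
  moreover have "eventually (\<lambda>s. g s = p s) (at 0 within RHP)"
    using g(2) by (auto simp: eventually_at_filter)
  ultimately have lim: "(p \<longlongrightarrow> g 0) (at 0 within RHP)"
    using tendsto_cong by blast
  have nb: "at (0::complex) within RHP \<noteq> bot"
    using zero_islimpt_RHP trivial_limit_within by blast
  have "eventually (\<lambda>s. \<epsilon> \<le> Re (p s)) (at 0 within RHP)"
    using lb by (auto simp: eventually_at_filter)
  then have "\<epsilon> \<le> Re (g 0)"
    using tendsto_lowerbound[OF tendsto_Re[OF lim] _ nb] by blast
  then have g0: "g 0 \<noteq> 0" using e by auto
  define a0 where "a0 = M^2/\<epsilon> + 1"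
  have a0p: "a0 > 0" using e by (simp add: a0_def add_nonneg_pos)
  show ?thesis
  proof (intro exI[of _ a0] conjI allI impI a0p)
    fix a assume aa: "a \<ge> a0"
    then have a: "a > 0" using a0p by linarith
    have "M^2/\<epsilon> \<le> a" using aa by (simp add: a0_def)
    then have ae: "a * \<epsilon> \<ge> M^2" using e by (simp add: divide_le_eq mult.commute)
    define d where "d = min (1/4) (\<epsilon>/(4*a))"
    have d: "d > 0" using e a by (simp add: d_def)
    note F = F_props[OF A real lb less_imp_le[OF e] M a ae]
    define H where "H = (\<lambda>s. s / (s + complex_of_real a) * (1 + p s / s))"
    have eq: "\<forall>s\<in>RHP. (s + p s)/(s + of_real a) = H s"
    proof
      fix s assume s: "s \<in> RHP"
      then have "s \<noteq> 0" by (rule RHP_ne0)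
      then show "(s + p s)/(s + of_real a) = H s" by (simp add: H_def field_simps)
    qed
    have A0H: "A0 H" by (rule A0_cong[OF F(1) eq])
    have PRH: "PR (\<lambda>s. H s - complex_of_real d)"
      unfolding PR_def
    proof (intro conjI ballI allI impI)
      have "H holomorphic_on RHP" using A0H unfolding A0_def Hinf_def by blast
      then show "(\<lambda>s. H s - complex_of_real d) holomorphic_on RHP"
        by (intro holomorphic_intros)
    next
      fix x :: real assume x: "x > 0"
      then have "complex_of_real x \<in> RHP" by (simp add: RHP_def)
      then have "H (of_real x) = (of_real x + p (of_real x))/(of_real x + of_real a)"
        using eq by simp
      then have "H (of_real x) \<in> \<real>" using F(2) x by simp
      then show "H (complex_of_real x) - complex_of_real d \<in> \<real>" by (intro Reals_diff) auto
    next
      fix s assume s: "s \<in> RHP"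
      have "Re ((s + p s)/(s + of_real a)) \<ge> d" using F(3) s by (simp add: d_def)
      then show "0 \<le> Re (H s - complex_of_real d)" using eq s by simp
    qed
    have "ESPR H" unfolding ESPR_def using A0H PRH d by blast
    then show "p \<in> Pclass (\<lambda>s. s / (s + complex_of_real a))"
      unfolding Pclass_def H_def using H lim g0 by blast
  qed
qed

lemma h_good:
  assumes a: "a > 0"
  shows "PR (\<lambda>s. s / (s + complex_of_real a)) \<and> A0 (\<lambda>s. s / (s + complex_of_real a))"
proof -
  have A: "A0 (\<lambda>s. 0)" unfolding A0_def Hinf_def
    by (intro conjI exI[of _ "\<lambda>s. 0"]) (auto intro: holomorphic_intros continuous_intros simp: bounded_iff)
  note F = F_props[of "\<lambda>s. 0" 0 0 a, OF A _ _ _ _ a]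
  have F1: "A0 (\<lambda>s. (s + 0) / (s + complex_of_real a))" using F by simp
  have F2: "\<forall>x::real. x>0 \<longrightarrow> (complex_of_real x)/(complex_of_real x + complex_of_real a) \<in> \<real>"
    by (intro allI impI Reals_divide Reals_add) auto
  have F3: "\<forall>s\<in>RHP. Re (s/(s + of_real a)) \<ge> 0" using F by simp
  have nzR: "s + of_real a \<noteq> 0" if "s \<in> RHP" for s
  proof
    assume "s + of_real a = 0"
    then have "Re (s + of_real a) = 0" by simp
    then show False using that a by (simp add: RHP_def)
  qed
  have "(\<lambda>s. s / (s + complex_of_real a)) holomorphic_on RHP"
    by (intro holomorphic_intros) (use nzR in auto)
  then show ?thesis using F1 F2 F3 unfolding PR_def by simp
qed

theorem lemma6:
  fixes n :: nat and p :: "nat \<Rightarrow> complex \<Rightarrow> complex"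
  assumes "\<forall>i\<in>{1..n}. ESPR (p i)"
  shows "\<exists>h. PR h \<and> A0 h \<and> (\<forall>i\<in>{1..n}. p i \<in> Pclass h)"
proof -
  have "\<forall>i\<in>{1..n}. \<exists>a0>0. \<forall>a\<ge>a0. p i \<in> Pclass (\<lambda>s. s / (s + complex_of_real a))"
    using assms p_good by blast
  then obtain f where f: "\<forall>i\<in>{1..n}. f i > 0 \<and> (\<forall>a\<ge>f i. p i \<in> Pclass (\<lambda>s. s / (s + complex_of_real a)))"
    by metis
  define a where "a = 1 + sum f {1..n}"
  have sp: "sum f {1..n} \<ge> 0" using f by (intro sum_nonneg) (auto simp: less_imp_le)
  have a: "a > 0" using sp by (simp add: a_def)
  have le: "f i \<le> a" if "i \<in> {1..n}" for i
  proof -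
    have "f i \<le> sum f {1..n}" using f that by (intro member_le_sum) (auto simp: less_imp_le)
    then show ?thesis by (simp add: a_def)
  qed
  show ?thesis
    using h_good[OF a] f le by (intro exI[of _ "\<lambda>s. s / (s + complex_of_real a)"]) blast
qed

end
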